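(* Let $Z_1, Z_2, \ldots$ be i.i.d. from a distribution $\mathcal{D}$ on a set $\mathbb{Z}$, let $\ell:\Theta\times\mathbb{Z}\to[0,\infty)$ be a loss function with risk $R(\theta)=\mathbb{E}_{Z\sim\mathcal{D}}\{\ell(\theta;Z)\}$ and risk minimizer $\theta^*=\arg\min_{\theta\in\Theta}R(\theta)$. Suppose the strong central condition holds with learning rate $\bar\omega>0$. For $k\ge 1$ let $\widehat\theta_k$ be any almost-empirical-risk-minimizer (AERM) computed from $Z^k=(Z_1,\ldots,Z_k)$, let $\widehat\theta_0\in\Theta$ be a fixed constant, and for $\omega\ge 0$ define the online GUe-value $$G_{n,\mathrm{on}}(\theta)=\exp\Bigl[-\omega\sum_{i=1}^n\{\ell(\widehat\theta_{i-1};Z_i)-\ell(\theta;Z_i)\}\Bigr].$$ If $\omega\in[0,\bar\omega)$, then $(G_{n,\mathrm{on}}(\theta^* ))_{n\in\mathbb{N}}$ is an e-process.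
   Context: The empirical risk is $\widehat R_n(\theta)=n^{-1}\sum_{i=1}^n\ell(\theta;Z_i)$. For fixed constants $\varepsilon,\delta\ge0$, an $(\varepsilon,\delta)$-AERM based on $Z^n$ is an estimator $\widehat\theta_n$ (a measurable function of $Z^n$) with $\widehat R_n(\widehat\theta_n)\le\inf_{\theta\in\Theta}\widehat R_n(\theta)+\delta/n^{1+\varepsilon}$; an AERM is an $(\varepsilon,\delta)$-AERM for some such constants. Strong central condition with learning rate $\bar\omega>0$: $\mathbb{E}_{Z\sim\mathcal{D}}\exp[-\omega\{\ell(\theta;Z)-\ell(\theta^*;Z)\}]\le1$ for all $\theta\in\Theta$ and all $\omega\in[0,\bar\omega)$. An e-process is a non-negative supermartingale $(E_n)_{n\in\mathbb{N}}$ (with respect to the filtration generated by the data) such that $\mathbb{E}(E_\tau)\le 1$ for every stopping time $\tau$. *)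

theory Defs
  imports "HOL-Probability.Probability"
begin

definition nat_filtration ::
  "'o measure \<Rightarrow> 'z measure \<Rightarrow> (nat \<Rightarrow> 'o \<Rightarrow> 'z) \<Rightarrow> nat \<Rightarrow> 'o measure" where
  "nat_filtration M D Z n =
     sigma (space M) (\<Union>i\<in>{1..n}. {Z i -` A \<inter> space M | A. A \<in> sets D})"

definition supermartingale ::
  "'o measure \<Rightarrow> (nat \<Rightarrow> 'o measure) \<Rightarrow> (nat \<Rightarrow> 'o \<Rightarrow> real) \<Rightarrow> bool" where
  "supermartingale M F X \<longleftrightarrow>
     (\<forall>n. X n \<in> borel_measurable (F n) \<and> integrable M (X n) \<and>
          (AE x in M. real_cond_exp M (F n) (X (Suc n)) x \<le> X n x))"

definition e_process ::
  "'o measure \<Rightarrow> (nat \<Rightarrow> 'o measure) \<Rightarrow> (nat \<Rightarrow> 'o \<Rightarrow> real) \<Rightarrow> bool" where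
  "e_process M F E \<longleftrightarrow>
     (\<forall>n. \<forall>x\<in>space M. 0 \<le> E n x) \<and> supermartingale M F E \<and>
     (\<forall>\<tau> :: 'o \<Rightarrow> nat. stopping_time F \<tau> \<longrightarrow> (\<integral>\<^sup>+ x. ennreal (E (\<tau> x) x) \<partial>M) \<le> 1)"

definition emp_risk :: "('p \<Rightarrow> 'z \<Rightarrow> real) \<Rightarrow> (nat \<Rightarrow> 'o \<Rightarrow> 'z) \<Rightarrow> nat \<Rightarrow> 'o \<Rightarrow> 'p \<Rightarrow> real" where
  "emp_risk loss Z n x \<theta> = (\<Sum>i=1..n. loss \<theta> (Z i x)) / real n"

definition is_AERM ::
  "'o measure \<Rightarrow> 'z measure \<Rightarrow> 'p measure \<Rightarrow> 'p set \<Rightarrow> ('p \<Rightarrow> 'z \<Rightarrow> real) \<Rightarrow>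
   (nat \<Rightarrow> 'o \<Rightarrow> 'z) \<Rightarrow> (nat \<Rightarrow> 'o \<Rightarrow> 'p) \<Rightarrow> bool" where
  "is_AERM M D P \<Theta> loss Z thhat \<longleftrightarrow>
     (\<exists>\<epsilon> \<delta>::real. 0 \<le> \<epsilon> \<and> 0 \<le> \<delta> \<and>
       (\<forall>k\<ge>1. thhat k \<in> measurable (nat_filtration M D Z k) P \<and>
         (\<forall>x\<in>space M. thhat k x \<in> \<Theta> \<and>
            emp_risk loss Z k x (thhat k x)
              \<le> (INF \<theta>\<in>\<Theta>. emp_risk loss Z k x \<theta>) + \<delta> / real k powr (1 + \<epsilon>))))"

definition G_on ::
  "real \<Rightarrow> ('p \<Rightarrow> 'z \<Rightarrow> real) \<Rightarrow> (nat \<Rightarrow> 'o \<Rightarrow> 'z) \<Rightarrow> (nat \<Rightarrow> 'o \<Rightarrow> 'p) \<Rightarrow> 'p \<Rightarrow> nat \<Rightarrow> 'o \<Rightarrow> real" where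
  "G_on \<omega> loss Z thhat \<theta> n x =
     exp (- \<omega> * (\<Sum>i=1..n. loss (thhat (i - 1) x) (Z i x) - loss \<theta> (Z i x)))"

end

theory Submission
  imports Defs
begin


locale lsetup = M: prob_space M + D: prob_space D
  for M :: "'o measure" and D :: "'z measure" +
  fixes P :: "'p measure" and \<Theta> :: "'p set" and loss :: "'p \<Rightarrow> 'z \<Rightarrow> real"
    and Z :: "nat \<Rightarrow> 'o \<Rightarrow> 'z" and thhat :: "nat \<Rightarrow> 'o \<Rightarrow> 'p"
    and \<theta>star :: 'p and \<omega> :: real
  assumes Z_meas: "\<And>i. i \<ge> 1 \<Longrightarrow> Z i \<in> measurable M D"
    and Z_distr: "\<And>i. i \<ge> 1 \<Longrightarrow> distr M D (Z i) = D"
    and Z_indep: "M.indep_vars (\<lambda>_. D) Z {1..}"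
    and spP: "space P = \<Theta>"
    and loss_meas: "(\<lambda>(\<theta>, z). loss \<theta> z) \<in> borel_measurable (P \<Otimes>\<^sub>M D)"
    and star_in: "\<theta>star \<in> \<Theta>"
    and central: "\<And>\<theta>. \<theta> \<in> \<Theta> \<Longrightarrow>
        (\<integral>\<^sup>+ z. ennreal (exp (- \<omega> * (loss \<theta> z - loss \<theta>star z))) \<partial>D) \<le> 1"
    and th_meas: "\<And>k. thhat k \<in> measurable (nat_filtration M D Z k) P"
begin

abbreviation "F \<equiv> nat_filtration M D Z"
abbreviation "G \<equiv> G_on \<omega> loss Z thhat \<theta>star"
definition "h n x = exp (- \<omega> * (loss (thhat n x) (Z (Suc n) x) - loss \<theta>star (Z (Suc n) x)))"
definition "gen n = (\<Union>i\<in>{1..n}. {Z i -` A \<inter> space M | A. A \<in> sets D})"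

lemma gen_Pow: "gen n \<subseteq> Pow (space M)"
  unfolding gen_def by auto

lemma gen_sets: "gen n \<subseteq> sets M"
  unfolding gen_def using Z_meas by (auto intro!: measurable_sets)

lemma F_space[simp]: "space (F n) = space M"
  unfolding nat_filtration_def gen_def[symmetric] using gen_Pow by (simp add: space_measure_of_conv)

lemma F_sets: "sets (F n) = sigma_sets (space M) (gen n)"
  unfolding nat_filtration_def gen_def[symmetric] using gen_Pow by (simp add: sets_measure_of)

lemma F_sub: "sets (F n) \<subseteq> sets M"
  unfolding F_sets using gen_sets sets.sigma_sets_subset[of "gen n" M] by simp

lemma subalg: "subalgebra M (F n)"
  unfolding subalgebra_def using F_sub by simp

lemma F_mono: "m \<le> n \<Longrightarrow> sets (F m) \<subseteq> sets (F n)"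
proof -
  assume "m \<le> n"
  then have "gen m \<subseteq> gen n" unfolding gen_def by (intro UN_mono) auto
  then show ?thesis unfolding F_sets by (rule sigma_sets_mono')
qed

lemma Z_meas_F: "1 \<le> i \<Longrightarrow> i \<le> n \<Longrightarrow> Z i \<in> measurable (F n) D"
proof (rule measurableI)
  fix x assume i: "1 \<le> i" and x: "x \<in> space (F n)"
  have "x \<in> space M" using x by simp
  then show "Z i x \<in> space D"
    by (rule measurable_space[OF Z_meas[OF i]])
next
  fix A assume "1 \<le> i" "i \<le> n" "A \<in> sets D"
  then have "i \<in> {1..n}" by simp
  then have "Z i -` A \<inter> space M \<in> gen n" unfolding gen_def using \<open>A \<in> sets D\<close> by blast
  then show "Z i -` A \<inter> space (F n) \<in> sets (F n)" unfolding F_sets by auto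
qed

lemma th_meas_F: "k \<le> n \<Longrightarrow> thhat k \<in> measurable (F n) P"
  using th_meas[of k] F_mono[of k n]
  by (metis measurable_from_subalg F_space subalgebra_def)

definition "E i = {Z i -` A \<inter> space M | A. A \<in> sets D}"

lemma indep_n: "M.indep_set (sets (F n)) (E (Suc n))"
proof -
  have E: "M.indep_sets E {1..}" using Z_indep unfolding M.indep_vars_def2 E_def by auto
  let ?I = "\<lambda>j. case j of True \<Rightarrow> {1..n} | False \<Rightarrow> {Suc n}"
  have I: "M.indep_sets (\<lambda>j. sigma_sets (space M) (\<Union>i\<in>?I j. E i)) UNIV"
  proof (rule M.indep_sets_collect_sigma)
    show "M.indep_sets E (\<Union>j\<in>UNIV. ?I j)"
      by (rule M.indep_sets_mono_index[OF _ E]) (auto simp: UNIV_bool)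
  next
    fix i j show "Int_stable (E i)"
      unfolding Int_stable_def E_def
    proof (safe)
      fix A B assume "A \<in> sets D" "B \<in> sets D"
      then show "\<exists>C. (Z i -` A \<inter> space M) \<inter> (Z i -` B \<inter> space M) = Z i -` C \<inter> space M \<and> C \<in> sets D"
        by (intro exI[of _ "A \<inter> B"]) auto
    qed
  next
    show "disjoint_family_on ?I UNIV"
      unfolding disjoint_family_on_def by (auto split: bool.split)
  qed
  show ?thesis
    unfolding M.indep_set_def
  proof (rule M.indep_sets_mono_sets[OF I])
    fix b :: bool
    show "(case b of True \<Rightarrow> sets (F n) | False \<Rightarrow> E (Suc n)) \<subseteq> sigma_sets (space M) (\<Union>i\<in>?I b. E i)"
      by (cases b) (auto simp: F_sets gen_def E_def)
  qed
qed

lemma id_meas: "(\<lambda>x. x) \<in> measurable M (F n)"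
  by (rule measurableI) (use F_sub in auto)

lemma distr_eq: "distr M (F n) (\<lambda>x. x) \<Otimes>\<^sub>M D = distr M (F n \<Otimes>\<^sub>M D) (\<lambda>x. (x, Z (Suc n) x))"
proof (rule pair_measure_eqI)
  show "sigma_finite_measure (distr M (F n) (\<lambda>x. x))"
    using M.prob_space_distr[OF id_meas] prob_space_imp_sigma_finite by blast
  show "sigma_finite_measure D" by (rule prob_space_imp_sigma_finite) (rule D.prob_space_axioms)
  show "sets (distr M (F n) (\<lambda>x. x) \<Otimes>\<^sub>M D) = sets (distr M (F n \<Otimes>\<^sub>M D) (\<lambda>x. (x, Z (Suc n) x)))"
    by (simp add: sets_pair_measure_cong[OF sets_distr refl])
next
  fix A B assume A: "A \<in> sets (distr M (F n) (\<lambda>x. x))" and B: "B \<in> sets D"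
  have AF: "A \<in> sets (F n)" using A by simp
  then have AM: "A \<in> sets M" using F_sub by auto
  have Zm: "Z (Suc n) \<in> measurable M D" using Z_meas by simp
  have pm: "(\<lambda>x. (x, Z (Suc n) x)) \<in> measurable M (F n \<Otimes>\<^sub>M D)"
    using id_meas Zm by (rule measurable_Pair)
  have ZB: "Z (Suc n) -` B \<inter> space M \<in> E (Suc n)" using B unfolding E_def by auto
  have e1: "emeasure (distr M (F n) (\<lambda>x. x)) A = emeasure M A"
    using AF AM sets.sets_into_space[OF AM] by (subst emeasure_distr[OF id_meas]) (auto simp: Int_absorb2)
  have e2: "emeasure D B = emeasure M (Z (Suc n) -` B \<inter> space M)"
  proof -
    have "emeasure D B = emeasure (distr M D (Z (Suc n))) B" using Z_distr[of "Suc n"] by simp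
    also have "\<dots> = emeasure M (Z (Suc n) -` B \<inter> space M)" by (rule emeasure_distr[OF Zm B])
    finally show ?thesis .
  qed
  have e3: "emeasure (distr M (F n \<Otimes>\<^sub>M D) (\<lambda>x. (x, Z (Suc n) x))) (A \<times> B)
       = emeasure M (A \<inter> (Z (Suc n) -` B \<inter> space M))"
  proof -
    have "A \<times> B \<in> sets (F n \<Otimes>\<^sub>M D)" using AF B by (rule pair_measureI)
    then have "emeasure (distr M (F n \<Otimes>\<^sub>M D) (\<lambda>x. (x, Z (Suc n) x))) (A \<times> B)
       = emeasure M ((\<lambda>x. (x, Z (Suc n) x)) -` (A \<times> B) \<inter> space M)" by (rule emeasure_distr[OF pm])
    also have "(\<lambda>x. (x, Z (Suc n) x)) -` (A \<times> B) \<inter> space M = A \<inter> (Z (Suc n) -` B \<inter> space M)" by auto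
    finally show ?thesis .
  qed
  have p: "M.prob (A \<inter> (Z (Suc n) -` B \<inter> space M)) = M.prob A * M.prob (Z (Suc n) -` B \<inter> space M)"
    using M.indep_setD[OF indep_n AF ZB] .
  show "emeasure (distr M (F n) (\<lambda>x. x)) A * emeasure D B =
       emeasure (distr M (F n \<Otimes>\<^sub>M D) (\<lambda>x. (x, Z (Suc n) x))) (A \<times> B)"
  proof -
    have "emeasure (distr M (F n) (\<lambda>x. x)) A * emeasure D B = ennreal (M.prob A) * ennreal (M.prob (Z (Suc n) -` B \<inter> space M))"
      by (simp only: e1 e2 M.emeasure_eq_measure)
    also have "\<dots> = ennreal (M.prob A * M.prob (Z (Suc n) -` B \<inter> space M))"
      by (rule ennreal_mult[symmetric]) (rule measure_nonneg)+
    also have "\<dots> = emeasure (distr M (F n \<Otimes>\<^sub>M D) (\<lambda>x. (x, Z (Suc n) x))) (A \<times> B)"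
      by (simp only: e3 M.emeasure_eq_measure p)
    finally show ?thesis .
  qed
qed


lemma loss_comp: "f \<in> measurable N P \<Longrightarrow> g \<in> measurable N D \<Longrightarrow> (\<lambda>x. loss (f x) (g x)) \<in> borel_measurable N"
  by (rule measurable_Pair_compose_split[OF loss_meas])

lemma th_in: "x \<in> space M \<Longrightarrow> thhat n x \<in> \<Theta>"
  using measurable_space[OF th_meas[of n], of x] spP by simp

lemma key:
  assumes f: "f \<in> borel_measurable (F n)"
  shows "(\<integral>\<^sup>+x. f x * ennreal (h n x) \<partial>M) \<le> (\<integral>\<^sup>+x. f x \<partial>M)"
proof -
  let ?M' = "distr M (F n) (\<lambda>x. x)"
  let ?Y = "Z (Suc n)"
  define g where "g = (\<lambda>p. f (fst p) * ennreal (exp (- \<omega> * (loss (thhat n (fst p)) (snd p) - loss \<theta>star (snd p)))))"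
  have sM': "sets ?M' = sets (F n)" by simp
  have fstm: "fst \<in> measurable (F n \<Otimes>\<^sub>M D) (F n)" by (rule measurable_fst)
  have sndm: "snd \<in> measurable (F n \<Otimes>\<^sub>M D) D" by (rule measurable_snd)
  have t: "(\<lambda>p. thhat n (fst p)) \<in> measurable (F n \<Otimes>\<^sub>M D) P"
    by (rule measurable_compose[OF fstm th_meas])
  have l1: "(\<lambda>p. loss (thhat n (fst p)) (snd p)) \<in> borel_measurable (F n \<Otimes>\<^sub>M D)"
    by (rule loss_comp[OF t sndm])
  have l2: "(\<lambda>p. loss \<theta>star (snd p)) \<in> borel_measurable (F n \<Otimes>\<^sub>M D)"
    by (rule loss_comp[OF _ sndm]) (use star_in spP in simp)
  have f1: "(\<lambda>p. f (fst p)) \<in> borel_measurable (F n \<Otimes>\<^sub>M D)"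
    by (rule measurable_compose[OF fstm f])
  have gm: "g \<in> borel_measurable (F n \<Otimes>\<^sub>M D)"
    unfolding g_def using f1 l1 l2 by measurable
  have gm': "g \<in> borel_measurable (?M' \<Otimes>\<^sub>M D)"
    using gm by (simp add: measurable_cong_sets[OF sets_pair_measure_cong[OF sM' refl] refl])
  have pm: "(\<lambda>x. (x, ?Y x)) \<in> measurable M (F n \<Otimes>\<^sub>M D)"
    using id_meas Z_meas[of "Suc n"] by (intro measurable_Pair) auto
  have "(\<integral>\<^sup>+x. f x * ennreal (h n x) \<partial>M) = (\<integral>\<^sup>+x. g (x, ?Y x) \<partial>M)"
    by (simp add: g_def h_def)
  also have "\<dots> = (\<integral>\<^sup>+p. g p \<partial>distr M (F n \<Otimes>\<^sub>M D) (\<lambda>x. (x, ?Y x)))"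
    by (rule nn_integral_distr[symmetric]) (use pm gm in simp_all)
  also have "\<dots> = (\<integral>\<^sup>+p. g p \<partial>(?M' \<Otimes>\<^sub>M D))"
    by (simp only: distr_eq)
  also have "\<dots> = (\<integral>\<^sup>+x. \<integral>\<^sup>+z. g (x, z) \<partial>D \<partial>?M')"
    by (rule D.nn_integral_fst[symmetric, OF gm'])
  also have "\<dots> \<le> (\<integral>\<^sup>+x. f x \<partial>?M')"
  proof (rule nn_integral_mono)
    fix x assume "x \<in> space ?M'"
    then have x: "x \<in> space M" by simp
    have th: "thhat n x \<in> \<Theta>" by (rule th_in[OF x])
    have em: "(\<lambda>z. ennreal (exp (- \<omega> * (loss (thhat n x) z - loss \<theta>star z)))) \<in> borel_measurable D"
    proof -
      have a: "(\<lambda>z. loss (thhat n x) z) \<in> borel_measurable D"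
        using loss_comp[OF measurable_const[of "thhat n x" P D] measurable_ident_sets[of D D]] th spP by simp
      have b: "(\<lambda>z. loss \<theta>star z) \<in> borel_measurable D"
        using loss_comp[OF measurable_const[of "\<theta>star" P D] measurable_ident_sets[of D D]] star_in spP by simp
      show ?thesis using a b by measurable
    qed
    have "(\<integral>\<^sup>+z. g (x, z) \<partial>D) = f x * (\<integral>\<^sup>+z. ennreal (exp (- \<omega> * (loss (thhat n x) z - loss \<theta>star z))) \<partial>D)"
      unfolding g_def prod.sel by (rule nn_integral_cmult[OF em])
    also have "\<dots> \<le> f x * 1"
      by (rule mult_left_mono[OF central[OF th]]) simp
    finally show "(\<integral>\<^sup>+z. g (x, z) \<partial>D) \<le> f x" by simp
  qed
  also have "\<dots> = (\<integral>\<^sup>+x. f x \<partial>M)"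
    by (rule nn_integral_distr) (use id_meas f in simp_all)
  finally show ?thesis .
qed

lemma G_Suc: "G (Suc n) x = G n x * h n x"
  unfolding G_on_def h_def by (simp add: sum.cl_ivl_Suc ring_distribs exp_add[symmetric])

lemma G_0: "G 0 x = 1"
  unfolding G_on_def by simp

lemma G_pos: "0 < G n x"
  unfolding G_on_def by simp

lemma G_meas: "G n \<in> borel_measurable (F n)"
proof -
  have S: "(\<lambda>x. \<Sum>i=1..n. loss (thhat (i - 1) x) (Z i x) - loss \<theta>star (Z i x)) \<in> borel_measurable (F n)"
  proof (rule borel_measurable_sum)
    fix i assume i: "i \<in> {1..n}"
    have a: "(\<lambda>x. loss (thhat (i - 1) x) (Z i x)) \<in> borel_measurable (F n)"
      by (rule loss_comp[OF th_meas_F Z_meas_F]) (use i in auto)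
    have b: "(\<lambda>x. loss \<theta>star (Z i x)) \<in> borel_measurable (F n)"
      by (rule loss_comp[OF _ Z_meas_F]) (use i star_in spP in auto)
    show "(\<lambda>x. loss (thhat (i - 1) x) (Z i x) - loss \<theta>star (Z i x)) \<in> borel_measurable (F n)"
      using a b by (rule borel_measurable_diff)
  qed
  show ?thesis unfolding G_on_def using S by measurable
qed

lemma G_measM: "G n \<in> borel_measurable M"
  using measurable_from_subalg[OF subalg G_meas] .

lemma key_set:
  assumes A: "A \<in> sets (F n)"
  shows "(\<integral>\<^sup>+x. indicator A x * ennreal (G (Suc n) x) \<partial>M) \<le> (\<integral>\<^sup>+x. indicator A x * ennreal (G n x) \<partial>M)"
proof -
  have m: "(\<lambda>x. indicator A x * ennreal (G n x)) \<in> borel_measurable (F n)"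
    using A G_meas[of n] by measurable
  have "(\<integral>\<^sup>+x. indicator A x * ennreal (G (Suc n) x) \<partial>M) = (\<integral>\<^sup>+x. (indicator A x * ennreal (G n x)) * ennreal (h n x) \<partial>M)"
  proof -
    have e: "ennreal (G (Suc n) x) = ennreal (G n x) * ennreal (h n x)" for x
      unfolding G_Suc by (rule ennreal_mult) (simp_all add: h_def less_imp_le[OF G_pos])
    show ?thesis unfolding e by (simp add: mult.assoc)
  qed
  also have "\<dots> \<le> (\<integral>\<^sup>+x. indicator A x * ennreal (G n x) \<partial>M)"
    by (rule key[OF m])
  finally show ?thesis .
qed

lemma G_int_le1: "(\<integral>\<^sup>+x. ennreal (G n x) \<partial>M) \<le> 1"
proof (induction n)
  case 0
  then show ?case by (simp add: G_0 M.emeasure_space_1)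
next
  case (Suc n)
  have "space M \<in> sets (F n)" using sets.top[of "F n"] by simp
  note k = key_set[OF this]
  have e: "(\<integral>\<^sup>+x. indicator (space M) x * ennreal (G m x) \<partial>M) = (\<integral>\<^sup>+x. ennreal (G m x) \<partial>M)" for m
    by (rule nn_integral_cong) simp
  show ?case using k Suc.IH unfolding e by (rule order_trans)
qed

lemma G_integrable: "integrable M (G n)"
proof (rule integrableI_nonneg[OF G_measM])
  show "AE x in M. 0 \<le> G n x" using G_pos[of n] by (simp add: less_imp_le)
  show "(\<integral>\<^sup>+x. ennreal (G n x) \<partial>M) < \<infinity>"
    using order.strict_trans1[OF G_int_le1[of n] ennreal_one_less_top] by (simp add: infinity_ennreal_def)
qed


lemma set_int_le:
  assumes A: "A \<in> sets (F n)"
  shows "(\<integral>x. indicator A x * G (Suc n) x \<partial>M) \<le> (\<integral>x. indicator A x * G n x \<partial>M)"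
proof -
  have AM: "A \<in> sets M" using A F_sub by auto
  have i: "integrable M (\<lambda>x. indicator A x * G m x)" for m
    using integrable_mult_indicator[OF AM G_integrable[of m]] by simp
  have nn: "0 \<le> indicator A x * G m x" for x m
    using G_pos[of m x] by (simp add: indicator_def)
  have e: "ennreal (\<integral>x. indicator A x * G m x \<partial>M) = (\<integral>\<^sup>+x. indicator A x * ennreal (G m x) \<partial>M)" for m
  proof -
    have "ennreal (\<integral>x. indicator A x * G m x \<partial>M) = (\<integral>\<^sup>+x. ennreal (indicator A x * G m x) \<partial>M)"
      by (rule nn_integral_eq_integral[symmetric, OF i]) (simp add: nn)
    also have "\<dots> = (\<integral>\<^sup>+x. indicator A x * ennreal (G m x) \<partial>M)"
      by (rule nn_integral_cong) (simp add: indicator_def)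
    finally show ?thesis .
  qed
  have "ennreal (\<integral>x. indicator A x * G (Suc n) x \<partial>M) \<le> ennreal (\<integral>x. indicator A x * G n x \<partial>M)"
    unfolding e by (rule key_set[OF A])
  moreover have "0 \<le> (\<integral>x. indicator A x * G n x \<partial>M)"
    by (rule integral_nonneg_AE) (simp add: nn)
  ultimately show ?thesis by (simp add: ennreal_le_iff)
qed

lemma super_step: "AE x in M. real_cond_exp M (F n) (G (Suc n)) x \<le> G n x"
proof -
  interpret S: sigma_finite_subalgebra M "F n"
    by (rule finite_measure_subalgebra_is_sigma_finite)
       (simp add: finite_measure_subalgebra_def finite_measure_subalgebra_axioms_def subalg M.finite_measure_axioms)
  let ?c = "real_cond_exp M (F n) (G (Suc n))"
  have cF: "?c \<in> borel_measurable (F n)" by simp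
  have GF: "G n \<in> borel_measurable (F n)" by (rule G_meas)
  define B where "B = {x \<in> space M. G n x < ?c x}"
  have B: "B \<in> sets (F n)"
  proof -
    have "{x \<in> space (F n). G n x < ?c x} \<in> sets (F n)" using cF GF by measurable
    then show ?thesis unfolding B_def by simp
  qed
  have BM: "B \<in> sets M" using B F_sub by auto
  have ic: "integrable M ?c" using G_integrable by (rule S.real_cond_exp_int)
  have i1: "integrable M (\<lambda>x. indicator B x * ?c x)"
    using integrable_mult_indicator[OF BM ic] by simp
  have i2: "integrable M (\<lambda>x. indicator B x * G n x)"
    using integrable_mult_indicator[OF BM G_integrable[of n]] by simp
  have "(\<integral>x. indicator B x * ?c x \<partial>M) = (\<integral>x. indicator B x * G (Suc n) x \<partial>M)"
    using S.real_cond_exp_intA[OF G_integrable B] unfolding set_lebesgue_integral_def by simp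
  also have "\<dots> \<le> (\<integral>x. indicator B x * G n x \<partial>M)" by (rule set_int_le[OF B])
  finally have le: "(\<integral>x. indicator B x * ?c x - indicator B x * G n x \<partial>M) \<le> 0"
    using i1 i2 by simp
  have nn: "0 \<le> indicator B x * ?c x - indicator B x * G n x" for x
    by (simp add: indicator_def B_def)
  have "(\<integral>x. indicator B x * ?c x - indicator B x * G n x \<partial>M) = 0"
    using le integral_nonneg_AE[of "\<lambda>x. indicator B x * ?c x - indicator B x * G n x" M] nn by simp
  then have "AE x in M. indicator B x * ?c x - indicator B x * G n x = 0"
    using integral_nonneg_eq_0_iff_AE[of M "\<lambda>x. indicator B x * ?c x - indicator B x * G n x"] i1 i2 nn by simp
  then show ?thesis
  proof (rule AE_mp)
    show "AE x in M. indicator B x * ?c x - indicator B x * G n x = 0 \<longrightarrow> ?c x \<le> G n x"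
    proof (rule AE_I2, rule impI)
      fix x assume x: "x \<in> space M" and z: "indicator B x * ?c x - indicator B x * G n x = 0"
      show "?c x \<le> G n x"
      proof (rule ccontr)
        assume "\<not> ?c x \<le> G n x"
        then have "x \<in> B" using x unfolding B_def by simp
        then show False using z \<open>\<not> ?c x \<le> G n x\<close> by simp
      qed
    qed
  qed
qed

lemma supermart: "supermartingale M F G"
  unfolding supermartingale_def using G_meas G_integrable super_step by blast


lemma ind_meas:
  assumes [measurable]: "S \<in> sets M"
  shows "(\<lambda>x. indicator S x * ennreal (G m x)) \<in> borel_measurable M"
proof -
  note [measurable] = G_measM[of m]
  show ?thesis by measurable
qed

lemma stop_bound:
  assumes tau: "stopping_time F \<tau>"
  shows "(\<integral>\<^sup>+x. ennreal (G (\<tau> x) x) \<partial>M) \<le> 1"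
proof -
  define Tge where "Tge k = {x\<in>space M. k \<le> \<tau> x}" for k
  define Teq where "Teq j = {x\<in>space M. \<tau> x = j}" for j
  have Tgt: "Tge (Suc k) \<in> sets (F k)" for k
  proof -
    have "{x\<in>space (F k). k < \<tau> x} \<in> sets (F k)"
      using stopping_timeD2[OF tau, of k] unfolding pred_def .
    moreover have "{x\<in>space (F k). k < \<tau> x} = Tge (Suc k)" unfolding Tge_def by auto
    ultimately show ?thesis by simp
  qed
  have Tge0: "Tge 0 = space M" unfolding Tge_def by auto
  have TgeM: "Tge k \<in> sets M" for k
  proof (cases k)
    case 0 then show ?thesis using Tge0 by simp
  next
    case (Suc m) then show ?thesis using Tgt[of m] F_sub by auto
  qed
  have Teq_eq: "Teq j = Tge j - Tge (Suc j)" for j unfolding Teq_def Tge_def by auto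
  have TeqM: "Teq j \<in> sets M" for j unfolding Teq_eq using TgeM by auto
  define a where "a k = (\<integral>\<^sup>+x. indicator (Tge k) x * ennreal (G k x) \<partial>M)" for k
  define b where "b j = (\<integral>\<^sup>+x. indicator (Teq j) x * ennreal (G j x) \<partial>M)" for j
  have step: "b k + a (Suc k) \<le> a k" for k
  proof -
    have "a k = (\<integral>\<^sup>+x. indicator (Teq k) x * ennreal (G k x) + indicator (Tge (Suc k)) x * ennreal (G k x) \<partial>M)"
      unfolding a_def
    proof (rule nn_integral_cong)
      fix x assume x: "x \<in> space M"
      show "indicator (Tge k) x * ennreal (G k x) = indicator (Teq k) x * ennreal (G k x) + indicator (Tge (Suc k)) x * ennreal (G k x)"
        using x unfolding Tge_def Teq_def by (auto simp: indicator_def)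
    qed
    also have "\<dots> = b k + (\<integral>\<^sup>+x. indicator (Tge (Suc k)) x * ennreal (G k x) \<partial>M)"
      unfolding b_def by (rule nn_integral_add[OF ind_meas[OF TeqM] ind_meas[OF TgeM]])
    finally have e: "a k = b k + (\<integral>\<^sup>+x. indicator (Tge (Suc k)) x * ennreal (G k x) \<partial>M)" .
    have "a (Suc k) \<le> (\<integral>\<^sup>+x. indicator (Tge (Suc k)) x * ennreal (G k x) \<partial>M)"
      unfolding a_def by (rule key_set[OF Tgt])
    then show ?thesis unfolding e by (rule add_left_mono)
  qed
  have part: "(\<Sum>j<k. b j) + a k \<le> 1" for k
  proof (induction k)
    case 0
    have "a 0 = (\<integral>\<^sup>+x. ennreal (G 0 x) \<partial>M)"
      unfolding a_def Tge0 by (rule nn_integral_cong) simp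
    then show ?case using G_int_le1[of 0] by simp
  next
    case (Suc k)
    have "(\<Sum>j<Suc k. b j) + a (Suc k) = (\<Sum>j<k. b j) + (b k + a (Suc k))"
      by (simp add: add.assoc)
    also have "\<dots> \<le> (\<Sum>j<k. b j) + a k" using step[of k] by (rule add_left_mono)
    also have "\<dots> \<le> 1" by (rule Suc.IH)
    finally show ?case .
  qed
  have "(\<integral>\<^sup>+x. ennreal (G (\<tau> x) x) \<partial>M) = (\<integral>\<^sup>+x. (\<Sum>j. indicator (Teq j) x * ennreal (G j x)) \<partial>M)"
  proof (rule nn_integral_cong)
    fix x assume x: "x \<in> space M"
    have "(\<lambda>j. indicator (Teq j) x * ennreal (G j x)) = (\<lambda>j. if j = \<tau> x then ennreal (G j x) else 0)"
      using x unfolding Teq_def by (auto simp: indicator_def)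
    then have "(\<lambda>j. indicator (Teq j) x * ennreal (G j x)) sums ennreal (G (\<tau> x) x)"
      using sums_single[of "\<tau> x" "\<lambda>j. ennreal (G j x)"] by simp
    then show "ennreal (G (\<tau> x) x) = (\<Sum>j. indicator (Teq j) x * ennreal (G j x))"
      by (rule sums_unique)
  qed
  also have "\<dots> = (\<Sum>j. b j)"
    unfolding b_def by (rule nn_integral_suminf[OF ind_meas[OF TeqM]])
  also have "\<dots> \<le> 1"
  proof (rule suminf_le_const)
    show "summable b" by (rule summableI)
    fix k show "sum b {..<k} \<le> 1"
      using part[of k] by (rule order_trans[rotated]) simp
  qed
  finally show ?thesis .
qed

lemma eproc: "e_process M F G"
  unfolding e_process_def using G_pos supermart stop_bound by (auto simp: less_imp_le)

end

theorem lemma1: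
  fixes M :: "'o measure" and D :: "'z measure" and P :: "'p measure"
    and \<Theta> :: "'p set" and loss :: "'p \<Rightarrow> 'z \<Rightarrow> real"
    and Z :: "nat \<Rightarrow> 'o \<Rightarrow> 'z" and thhat :: "nat \<Rightarrow> 'o \<Rightarrow> 'p"
    and \<theta>star \<theta>0 :: 'p and \<omega>bar \<omega> :: real
  assumes "prob_space M" and "prob_space D"
    and Z_meas: "\<And>i. i \<ge> 1 \<Longrightarrow> Z i \<in> measurable M D"
    and Z_distr: "\<And>i. i \<ge> 1 \<Longrightarrow> distr M D (Z i) = D"
    and Z_indep: "prob_space.indep_vars M (\<lambda>_. D) Z {1..}"
    and "space P = \<Theta>"
    and loss_meas: "(\<lambda>(\<theta>, z). loss \<theta> z) \<in> borel_measurable (P \<Otimes>\<^sub>M D)"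
    and loss_nonneg: "\<And>\<theta> z. \<theta> \<in> \<Theta> \<Longrightarrow> z \<in> space D \<Longrightarrow> 0 \<le> loss \<theta> z"
    and star_in: "\<theta>star \<in> \<Theta>"
    and star_min: "\<And>\<theta>. \<theta> \<in> \<Theta> \<Longrightarrow>
        (\<integral>\<^sup>+ z. ennreal (loss \<theta>star z) \<partial>D) \<le> (\<integral>\<^sup>+ z. ennreal (loss \<theta> z) \<partial>D)"
    and "\<omega>bar > 0"
    and central: "\<And>\<theta> w. \<theta> \<in> \<Theta> \<Longrightarrow> 0 \<le> w \<Longrightarrow> w < \<omega>bar \<Longrightarrow>
        (\<integral>\<^sup>+ z. ennreal (exp (- w * (loss \<theta> z - loss \<theta>star z))) \<partial>D) \<le> 1"
    and aerm: "is_AERM M D P \<Theta> loss Z thhat"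
    and "\<theta>0 \<in> \<Theta>" and "\<And>x. thhat 0 x = \<theta>0"
    and "0 \<le> \<omega>" and "\<omega> < \<omega>bar"
  shows "e_process M (nat_filtration M D Z) (G_on \<omega> loss Z thhat \<theta>star)"
proof -
  note A = assms
  have thmeas: "thhat k \<in> measurable (nat_filtration M D Z k) P" for k
  proof (cases "k = 0")
    case True
    have "thhat k = (\<lambda>x. \<theta>0)" using True A(15) by auto
    then show ?thesis using A(6,14) by (simp add: measurable_const)
  next
    case False
    then show ?thesis using aerm unfolding is_AERM_def by auto
  qed
  have cen: "\<And>\<theta>. \<theta> \<in> \<Theta> \<Longrightarrow>
        (\<integral>\<^sup>+ z. ennreal (exp (- \<omega> * (loss \<theta> z - loss \<theta>star z))) \<partial>D) \<le> 1"
    using central A(16,17) by blast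
  interpret L: lsetup M D P \<Theta> loss Z thhat \<theta>star \<omega>
    unfolding lsetup_def lsetup_axioms_def
    using A(1,2,3,4,5,6,7,9) cen thmeas by blast
  show ?thesis using L.eproc .
qed

end
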